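(* Let $G$ be a group and $A\subseteq G$ a nonempty finite set. (a) For any nonempty finite $B\subseteq G$: $\operatorname{VC}^\ell_B(A)=0$ iff $|BA|=|A|$, and $\operatorname{VC}^r_B(A)=0$ iff $|AB|=|A|$. (b) The following are equivalent: (i) $\operatorname{VC}^\ell_{A^{-1}}(A)=0$; (ii) $\operatorname{VC}^r_{A^{-1}}(A)=0$; (iii) $|AA^{-1}|=|A|$; (iv) $|A^{-1}A|=|A|$; (v) $A$ is a coset of a subgroup of $G$. (c) The following are equivalent: (i) $\operatorname{VC}^\ell_A(A)=0$; (ii) $\operatorname{VC}^r_A(A)=0$; (iii) $|AA|=|A|$; (iv) $A=aH$ for some subgroup $H\leq G$ and $a\in G$ with $aH=Ha$.
   Context: $AB=\{ab\}$, $A^{-1}=\{a^{-1}\}$. A set system $\mathcal F$ on $X$ shatters $Y\subseteq X$ if $\{Y\cap S:S\in\mathcal F\}$ is the power set of $Y$; $\operatorname{VC}(\mathcal F)$ is the maximum size of a finite shattered set (so the empty set is shattered by any nonempty system). $\operatorname{VC}^\ell_B(A)=\operatorname{VC}(\{xA:x\in B\})$, $\operatorname{VC}^r_B(A)=\operatorname{VC}(\{Ax:x\in B\})$. *)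

theory Defs
  imports "HOL-Algebra.Coset" "HOL-Library.Extended_Nat"
begin

definition shatters :: "'a set set \<Rightarrow> 'a set \<Rightarrow> bool" where
  "shatters F Y \<longleftrightarrow> (\<lambda>S. Y \<inter> S) ` F = Pow Y"

definition VC :: "'a set \<Rightarrow> 'a set set \<Rightarrow> enat" where
  "VC X F = (SUP Y \<in> {Y. Y \<subseteq> X \<and> finite Y \<and> shatters F Y}. enat (card Y))"

definition VC_left :: "('a, 'b) monoid_scheme \<Rightarrow> 'a set \<Rightarrow> 'a set \<Rightarrow> enat" where
  "VC_left G B A = VC (carrier G) ((\<lambda>x. x <#\<^bsub>G\<^esub> A) ` B)"

definition VC_right :: "('a, 'b) monoid_scheme \<Rightarrow> 'a set \<Rightarrow> 'a set \<Rightarrow> enat" where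
  "VC_right G B A = VC (carrier G) ((\<lambda>x. A #>\<^bsub>G\<^esub> x) ` B)"

end

theory Submission
  imports Defs
begin

lemma VC_zero_iff:
  assumes "F \<subseteq> Pow X"
  shows "VC X F = 0 \<longleftrightarrow> (\<forall>S\<in>F. \<forall>T\<in>F. S = T)"
proof
  assume eq: "\<forall>S\<in>F. \<forall>T\<in>F. S = T"
  have "VC X F \<le> 0" unfolding VC_def
  proof (rule SUP_least)
    fix Y assume "Y \<in> {Y. Y \<subseteq> X \<and> finite Y \<and> shatters F Y}"
    hence sh: "(\<lambda>S. Y \<inter> S) ` F = Pow Y" by (simp add: shatters_def)
    have "Y = {}"
    proof (rule ccontr)
      assume "Y \<noteq> {}"
      then obtain y where y: "y \<in> Y" by blast
      have "{y} \<in> (\<lambda>S. Y \<inter> S) ` F" "{} \<in> (\<lambda>S. Y \<inter> S) ` F"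
        unfolding sh using y by auto
      then obtain S T where "S \<in> F" "T \<in> F" "Y \<inter> S = {y}" "Y \<inter> T = {}"
        by (auto elim!: imageE)
      thus False using eq by auto
    qed
    thus "enat (card Y) \<le> 0" by (simp add: zero_enat_def)
  qed
  thus "VC X F = 0" by simp
next
  assume v: "VC X F = 0"
  show "\<forall>S\<in>F. \<forall>T\<in>F. S = T"
  proof (rule ccontr)
    assume "\<not> ?thesis"
    then obtain S T g where ST: "S \<in> F" "T \<in> F" "(g \<in> S \<and> g \<notin> T) \<or> (g \<in> T \<and> g \<notin> S)"
      by blast
    hence gX: "g \<in> X" using assms by blast
    have "shatters F {g}" unfolding shatters_def
    proof
      show "(\<lambda>S. {g} \<inter> S) ` F \<subseteq> Pow {g}" by auto
      show "Pow {g} \<subseteq> (\<lambda>S. {g} \<inter> S) ` F"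
      proof
        fix Z assume "Z \<in> Pow {g}"
        hence "Z = {} \<or> Z = {g}" by auto
        moreover obtain S' T' where "S' \<in> F" "T' \<in> F" "g \<in> S'" "g \<notin> T'"
          using ST by (elim disjE) blast+
        ultimately show "Z \<in> (\<lambda>S. {g} \<inter> S) ` F"
        proof (elim disjE)
          assume "Z = {}" thus ?thesis using \<open>T' \<in> F\<close> \<open>g \<notin> T'\<close> by (intro image_eqI[of _ _ T']) auto
        next
          assume "Z = {g}" thus ?thesis using \<open>S' \<in> F\<close> \<open>g \<in> S'\<close> by (intro image_eqI[of _ _ S']) auto
        qed
      qed
    qed
    hence "enat (card {g}) \<le> VC X F" unfolding VC_def
      by (intro SUP_upper) (use gX in auto)
    thus False using v by (simp add: zero_enat_def)
  qed
qed

context group begin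

lemma lcos_img: "x \<in> carrier G \<Longrightarrow> x <# A = (\<lambda>a. x \<otimes> a) ` A"
  by (auto simp: l_coset_def)
lemma rcos_img: "x \<in> carrier G \<Longrightarrow> A #> x = (\<lambda>a. a \<otimes> x) ` A"
  by (auto simp: r_coset_def)

lemma card_lcos: "x \<in> carrier G \<Longrightarrow> A \<subseteq> carrier G \<Longrightarrow> card (x <# A) = card A"
  unfolding lcos_img
proof (rule card_image, rule inj_onI)
  fix u v assume "x \<in> carrier G" "A \<subseteq> carrier G" "u \<in> A" "v \<in> A" "x \<otimes> u = x \<otimes> v"
  moreover hence "u \<in> carrier G" "v \<in> carrier G" by blast+
  ultimately show "u = v" using Units_l_cancel[of x u v] by simp
qed
lemma card_rcos: "x \<in> carrier G \<Longrightarrow> A \<subseteq> carrier G \<Longrightarrow> card (A #> x) = card A"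
  unfolding rcos_img
proof (rule card_image, rule inj_onI)
  fix u v assume "x \<in> carrier G" "A \<subseteq> carrier G" "u \<in> A" "v \<in> A" "u \<otimes> x = v \<otimes> x"
  moreover hence "u \<in> carrier G" "v \<in> carrier G" by blast+
  ultimately show "u = v" using right_cancel[of x u v] by simp
qed
lemma finite_lcos: "finite A \<Longrightarrow> finite (x <# A)"
  by (auto simp: l_coset_def)
lemma finite_rcos: "finite A \<Longrightarrow> finite (A #> x)"
  by (auto simp: r_coset_def)

lemma setmult_Ul: "B <#> A = (\<Union>x\<in>B. x <# A)"
  by (auto simp: set_mult_def l_coset_def)
lemma setmult_Ur: "A <#> B = (\<Union>x\<in>B. A #> x)"
  by (auto simp: set_mult_def r_coset_def)

lemma all_eq_card_l:
  assumes "A \<subseteq> carrier G" "finite A" "B \<subseteq> carrier G" "finite B" "B \<noteq> {}"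
  shows "(\<forall>x\<in>B. \<forall>y\<in>B. x <# A = y <# A) \<longleftrightarrow> card (B <#> A) = card A"
proof
  assume eq: "\<forall>x\<in>B. \<forall>y\<in>B. x <# A = y <# A"
  obtain b where b: "b \<in> B" using assms by blast
  have e: "\<forall>x\<in>B. x <# A = b <# A" proof
    fix x assume "x \<in> B" thus "x <# A = b <# A" by (rule eq[rule_format, OF _ b]) qed
  have "B <#> A = (\<Union>x\<in>B. b <# A)" unfolding setmult_Ul
    by (rule SUP_cong[OF refl]) (rule e[rule_format])
  also have "\<dots> = b <# A" using b by auto
  finally show "card (B <#> A) = card A" using b assms card_lcos by auto
next
  assume c: "card (B <#> A) = card A"
  have fin: "finite (B <#> A)" unfolding setmult_Ul using assms finite_lcos by auto
  have "x <# A = B <#> A" if "x \<in> B" for x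
    using card_subset_eq[OF fin, of "x <# A"] that c card_lcos[of x A] assms
    unfolding setmult_Ul by auto
  thus "\<forall>x\<in>B. \<forall>y\<in>B. x <# A = y <# A" by auto
qed

lemma all_eq_card_r:
  assumes "A \<subseteq> carrier G" "finite A" "B \<subseteq> carrier G" "finite B" "B \<noteq> {}"
  shows "(\<forall>x\<in>B. \<forall>y\<in>B. A #> x = A #> y) \<longleftrightarrow> card (A <#> B) = card A"
proof
  assume eq: "\<forall>x\<in>B. \<forall>y\<in>B. A #> x = A #> y"
  obtain b where b: "b \<in> B" using assms by blast
  have e: "\<forall>x\<in>B. A #> x = A #> b" proof
    fix x assume "x \<in> B" thus "A #> x = A #> b" by (rule eq[rule_format, OF _ b]) qed
  have "A <#> B = (\<Union>x\<in>B. A #> b)" unfolding setmult_Ur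
    by (rule SUP_cong[OF refl]) (rule e[rule_format])
  also have "\<dots> = A #> b" using b by auto
  finally show "card (A <#> B) = card A" using b assms card_rcos by auto
next
  assume c: "card (A <#> B) = card A"
  have fin: "finite (A <#> B)" unfolding setmult_Ur using assms finite_rcos by auto
  have "A #> x = A <#> B" if "x \<in> B" for x
    using card_subset_eq[OF fin, of "A #> x"] that c card_rcos[of x A] assms
    unfolding setmult_Ur by auto
  thus "\<forall>x\<in>B. \<forall>y\<in>B. A #> x = A #> y" by auto
qed

lemma VC_left_iff:
  assumes "B \<subseteq> carrier G" "A \<subseteq> carrier G"
  shows "VC_left G B A = 0 \<longleftrightarrow> (\<forall>x\<in>B. \<forall>y\<in>B. x <# A = y <# A)"
proof -
  have "x <# A \<subseteq> carrier G" if "x \<in> B" for x using assms that l_coset_subset_G by blast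
  hence "(\<lambda>x. x <# A) ` B \<subseteq> Pow (carrier G)" by auto
  thus ?thesis unfolding VC_left_def by (simp add: VC_zero_iff)
qed

lemma VC_right_iff:
  assumes "B \<subseteq> carrier G" "A \<subseteq> carrier G"
  shows "VC_right G B A = 0 \<longleftrightarrow> (\<forall>x\<in>B. \<forall>y\<in>B. A #> x = A #> y)"
proof -
  have "A #> x \<subseteq> carrier G" if "x \<in> B" for x using assms that r_coset_subset_G by blast
  hence "(\<lambda>x. A #> x) ` B \<subseteq> Pow (carrier G)" by auto
  thus ?thesis unfolding VC_right_def by (simp add: VC_zero_iff)
qed

end

context group begin

lemma sinv_ball: "(\<forall>x\<in>set_inv A. \<forall>y\<in>set_inv A. P x y) \<longleftrightarrow> (\<forall>b\<in>A. \<forall>c\<in>A. P (inv b) (inv c))"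
  by (auto simp: SET_INV_def)

lemma lcond_imp_coset:
  assumes A: "A \<subseteq> carrier G" and a0: "a0 \<in> A"
    and eq: "\<forall>b\<in>A. \<forall>c\<in>A. inv b <# A = inv c <# A"
  shows "\<exists>H a. subgroup H G \<and> a \<in> carrier G \<and> A = a <# H"
proof -
  have a0c: "a0 \<in> carrier G" using A a0 by blast
  define H where "H = inv a0 <# A"
  have Hb: "H = inv b <# A" if "b \<in> A" for b unfolding H_def using eq[rule_format, OF a0 that] by simp
  have memH: "g \<in> H \<longleftrightarrow> (\<exists>c\<in>A. g = inv b \<otimes> c)" if "b \<in> A" for b g
    using Hb[OF that] by (auto simp: l_coset_def)
  have "subgroup H G"
  proof (rule subgroupI)
    show "H \<subseteq> carrier G" unfolding H_def using A a0c l_coset_subset_G by blast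
    show "H \<noteq> {}" using memH[OF a0] a0 by blast
  next
    fix h assume "h \<in> H"
    then obtain b where b: "b \<in> A" "h = inv a0 \<otimes> b" using memH[OF a0] by blast
    have bc: "b \<in> carrier G" using A b by blast
    have "inv h = inv b \<otimes> a0" using b bc a0c by (simp add: inv_mult_group)
    thus "inv h \<in> H" using memH[OF b(1)] a0 by blast
  next
    fix h k assume "h \<in> H" "k \<in> H"
    then obtain b where b: "b \<in> A" "h = inv a0 \<otimes> b" using memH[OF a0] by blast
    obtain c where c: "c \<in> A" "k = inv b \<otimes> c" using memH[OF b(1)] \<open>k \<in> H\<close> by blast
    have bc: "b \<in> carrier G" "c \<in> carrier G" using A b c by blast+
    have "h \<otimes> k = inv a0 \<otimes> c" using b c bc a0c
      by (simp add: m_assoc[symmetric]) (simp add: m_assoc)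
    thus "h \<otimes> k \<in> H" using memH[OF a0] c by blast
  qed
  moreover have "A = a0 <# H"
    unfolding H_def using A a0c by (simp add: lcos_m_assoc lcos_mult_one)
  ultimately show ?thesis using a0c by blast
qed

lemma rcond_imp_coset:
  assumes A: "A \<subseteq> carrier G" and a0: "a0 \<in> A"
    and eq: "\<forall>b\<in>A. \<forall>c\<in>A. A #> inv b = A #> inv c"
  shows "\<exists>H a. subgroup H G \<and> a \<in> carrier G \<and> A = H #> a"
proof -
  have a0c: "a0 \<in> carrier G" using A a0 by blast
  define H where "H = A #> inv a0"
  have Hb: "H = A #> inv b" if "b \<in> A" for b unfolding H_def using eq[rule_format, OF a0 that] by simp
  have memH: "g \<in> H \<longleftrightarrow> (\<exists>c\<in>A. g = c \<otimes> inv b)" if "b \<in> A" for b g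
    using Hb[OF that] by (auto simp: r_coset_def)
  have "subgroup H G"
  proof (rule subgroupI)
    show "H \<subseteq> carrier G" unfolding H_def using A a0c r_coset_subset_G by blast
    show "H \<noteq> {}" using memH[OF a0] a0 by blast
  next
    fix h assume "h \<in> H"
    then obtain b where b: "b \<in> A" "h = b \<otimes> inv a0" using memH[OF a0] by blast
    have bc: "b \<in> carrier G" using A b by blast
    have "inv h = a0 \<otimes> inv b" using b bc a0c by (simp add: inv_mult_group)
    thus "inv h \<in> H" using memH[OF b(1)] a0 by blast
  next
    fix h k assume "h \<in> H" "k \<in> H"
    then obtain b where b: "b \<in> A" "k = b \<otimes> inv a0" using memH[OF a0] by blast
    obtain c where c: "c \<in> A" "h = c \<otimes> inv b" using memH[OF b(1)] \<open>h \<in> H\<close> by blast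
    have bc: "b \<in> carrier G" "c \<in> carrier G" using A b c by blast+
    have "h \<otimes> k = c \<otimes> inv a0" using b c bc a0c
      by (simp add: m_assoc[symmetric]) (simp add: m_assoc)
    thus "h \<otimes> k \<in> H" using memH[OF a0] c by blast
  qed
  moreover have "A = H #> a0"
    unfolding H_def using A a0c by (simp add: coset_mult_assoc)
  ultimately show ?thesis using a0c by blast
qed

lemma coset_imp_lcond:
  assumes H: "subgroup H G" and a: "a \<in> carrier G" and A: "A = a <# H \<or> A = H #> a"
  shows "\<forall>b\<in>A. \<forall>c\<in>A. inv b <# A = inv c <# A"
proof -
  have Hc: "H \<subseteq> carrier G" using H subgroup.subset by blast
  obtain K where K: "\<And>b. b \<in> A \<Longrightarrow> inv b <# A = K"
  proof (cases "A = a <# H")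
    case True
    have "inv b <# A = H" if bA: "b \<in> A" for b
    proof -
      obtain h where h: "h \<in> H" "b = a \<otimes> h" using bA True unfolding l_coset_def by blast
      have hc: "h \<in> carrier G" using h Hc by blast
      have "inv b <# A = (inv b \<otimes> a) <# H" using True Hc a h hc by (simp add: lcos_m_assoc)
      also have "inv b \<otimes> a = (inv h \<otimes> inv a) \<otimes> a" using h(2) hc a by (simp add: inv_mult_group)
      also have "\<dots> = inv h" using hc a by (simp add: m_assoc)
      also have "inv h <# H = H" by (rule coset_join3[OF inv_closed[OF hc] H subgroup.m_inv_closed[OF H h(1)]])
      finally show ?thesis .
    qed
    thus ?thesis using that by blast
  next
    case False
    hence A2: "A = H #> a" using A by blast
    have "inv b <# A = (inv a <# H) #> a" if bA: "b \<in> A" for b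
    proof -
      obtain h where h: "h \<in> H" "b = h \<otimes> a" using bA A2 unfolding r_coset_def by blast
      have hc: "h \<in> carrier G" using h Hc by blast
      have "inv b <# A = (inv b <# H) #> a" using A2 Hc a h hc by (simp add: coset_assoc)
      also have "inv b <# H = inv a <# (inv h <# H)" using Hc a hc by (simp add: h(2) inv_mult_group lcos_m_assoc)
      also have "inv h <# H = H" by (rule coset_join3[OF inv_closed[OF hc] H subgroup.m_inv_closed[OF H h(1)]])
      finally show ?thesis .
    qed
    thus ?thesis using that by blast
  qed
  thus ?thesis by auto
qed

lemma coset_imp_rcond:
  assumes H: "subgroup H G" and a: "a \<in> carrier G" and A: "A = a <# H \<or> A = H #> a"
  shows "\<forall>b\<in>A. \<forall>c\<in>A. A #> inv b = A #> inv c"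
proof -
  have Hc: "H \<subseteq> carrier G" using H subgroup.subset by blast
  obtain K where K: "\<And>b. b \<in> A \<Longrightarrow> A #> inv b = K"
  proof (cases "A = H #> a")
    case True
    have "A #> inv b = H" if bA: "b \<in> A" for b
    proof -
      obtain h where h: "h \<in> H" "b = h \<otimes> a" using bA True unfolding r_coset_def by blast
      have hc: "h \<in> carrier G" using h Hc by blast
      have "A #> inv b = H #> (a \<otimes> inv b)" using True Hc a h hc by (simp add: coset_mult_assoc)
      also have "a \<otimes> inv b = a \<otimes> (inv a \<otimes> inv h)" using h(2) hc a by (simp add: inv_mult_group)
      also have "\<dots> = inv h" using hc a by (simp add: m_assoc[symmetric])
      also have "H #> inv h = H" by (rule coset_join2[OF inv_closed[OF hc] H subgroup.m_inv_closed[OF H h(1)]])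
      finally show ?thesis .
    qed
    thus ?thesis using that by blast
  next
    case False
    hence A2: "A = a <# H" using A by blast
    have "A #> inv b = a <# (H #> inv a)" if bA: "b \<in> A" for b
    proof -
      obtain h where h: "h \<in> H" "b = a \<otimes> h" using bA A2 unfolding l_coset_def by blast
      have hc: "h \<in> carrier G" using h Hc by blast
      have "A #> inv b = a <# (H #> inv b)" using A2 Hc a h hc by (simp add: coset_assoc)
      also have "H #> inv b = (H #> inv h) #> inv a" using Hc a hc by (simp add: h(2) inv_mult_group coset_mult_assoc)
      also have "H #> inv h = H" by (rule coset_join2[OF inv_closed[OF hc] H subgroup.m_inv_closed[OF H h(1)]])
      finally show ?thesis .
    qed
    thus ?thesis using that by blast
  qed
  thus ?thesis by auto
qed

end

context group begin

lemma lstab_nc: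
  assumes A: "A \<subseteq> carrier G" "finite A" and a: "a \<in> A"
    and eq: "\<forall>x\<in>A. \<forall>y\<in>A. x <# A = y <# A"
  shows "\<exists>H. subgroup H G \<and> A = a <# H \<and> a <# H = H #> a"
proof -
  have ac: "a \<in> carrier G" using A a by blast
  define H where "H = {g \<in> carrier G. g <# A = A}"
  have sub: "subgroup H G"
  proof (rule subgroupI)
    show "H \<subseteq> carrier G" unfolding H_def by blast
    show "H \<noteq> {}" using A(1) unfolding H_def by (auto intro!: exI[of _ \<one>] simp: lcos_mult_one)
  next
    fix g assume "g \<in> H"
    hence g: "g \<in> carrier G" "g <# A = A" unfolding H_def by auto
    have "inv g <# A = inv g <# (g <# A)" using g by simp
    also have "\<dots> = A" using g(1) A(1) by (simp add: lcos_m_assoc lcos_mult_one)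
    finally show "inv g \<in> H" unfolding H_def using g by simp
  next
    fix g k assume "g \<in> H" "k \<in> H"
    hence g: "g \<in> carrier G" "g <# A = A" "k \<in> carrier G" "k <# A = A" unfolding H_def by auto
    have "(g \<otimes> k) <# A = g <# (k <# A)" using g(1,3) A(1) by (simp add: lcos_m_assoc)
    thus "g \<otimes> k \<in> H" unfolding H_def using g by simp
  qed
  have Hc: "H \<subseteq> carrier G" unfolding H_def by blast
  have sub1: "A \<subseteq> a <# H"
  proof
    fix x assume x: "x \<in> A"
    have xc: "x \<in> carrier G" using x A by blast
    have "(inv a \<otimes> x) <# A = inv a <# (x <# A)" using xc ac A(1) by (simp add: lcos_m_assoc)
    also have "x <# A = a <# A" using eq[rule_format, OF x a] .
    also have "inv a <# (a <# A) = A" using ac A(1) by (simp add: lcos_m_assoc lcos_mult_one)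
    finally have "inv a \<otimes> x \<in> H" unfolding H_def using xc ac by simp
    moreover have "x = a \<otimes> (inv a \<otimes> x)" using xc ac by (simp add: m_assoc[symmetric])
    ultimately show "x \<in> a <# H" by (auto simp: l_coset_def)
  qed
  have sub2: "H #> a \<subseteq> A"
  proof
    fix y assume "y \<in> H #> a"
    then obtain h where h: "h \<in> H" "y = h \<otimes> a" by (auto simp: r_coset_def)
    have "y \<in> h <# A" using h a by (auto simp: l_coset_def)
    thus "y \<in> A" using h unfolding H_def by simp
  qed
  have finH: "finite H"
  proof -
    have "inj_on (\<lambda>h. h \<otimes> a) H"
    proof (rule inj_onI)
      fix u v assume "u \<in> H" "v \<in> H" "u \<otimes> a = v \<otimes> a"
      moreover hence "u \<in> carrier G" "v \<in> carrier G" using Hc by blast+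
      ultimately show "u = v" using right_cancel[of a u v] ac by simp
    qed
    moreover have "(\<lambda>h. h \<otimes> a) ` H \<subseteq> A" using sub2 rcos_img[OF ac] by simp
    ultimately show ?thesis using A(2) finite_imageD finite_subset by blast
  qed
  have c1: "card (a <# H) = card H" using card_lcos ac Hc by blast
  have c2: "card (H #> a) = card H" using card_rcos ac Hc by blast
  have fl: "finite (a <# H)" using finH finite_lcos by blast
  have cA: "card A \<le> card H" using card_mono[OF fl sub1] c1 by simp
  have cH: "card H \<le> card A" using card_mono[OF A(2) sub2] c2 by simp
  have e1: "A = a <# H" using card_seteq[OF fl sub1] cH c1 by simp
  have e2: "H #> a = A" using card_seteq[OF A(2) sub2] cA c2 by simp
  show ?thesis using sub e1 e2 by blast
qed

lemma rstab_nc: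
  assumes A: "A \<subseteq> carrier G" "finite A" and a: "a \<in> A"
    and eq: "\<forall>x\<in>A. \<forall>y\<in>A. A #> x = A #> y"
  shows "\<exists>H. subgroup H G \<and> A = a <# H \<and> a <# H = H #> a"
proof -
  have ac: "a \<in> carrier G" using A a by blast
  define H where "H = {g \<in> carrier G. A #> g = A}"
  have sub: "subgroup H G"
  proof (rule subgroupI)
    show "H \<subseteq> carrier G" unfolding H_def by blast
    show "H \<noteq> {}" using A(1) unfolding H_def by (auto intro!: exI[of _ \<one>])
  next
    fix g assume "g \<in> H"
    hence g: "g \<in> carrier G" "A #> g = A" unfolding H_def by auto
    have "A #> inv g = (A #> g) #> inv g" using g by simp
    also have "\<dots> = A" using g(1) A(1) by (simp add: coset_mult_assoc)
    finally show "inv g \<in> H" unfolding H_def using g by simp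
  next
    fix g k assume "g \<in> H" "k \<in> H"
    hence g: "g \<in> carrier G" "A #> g = A" "k \<in> carrier G" "A #> k = A" unfolding H_def by auto
    have "A #> (g \<otimes> k) = (A #> g) #> k" using g(1,3) A(1) by (simp add: coset_mult_assoc)
    thus "g \<otimes> k \<in> H" unfolding H_def using g by simp
  qed
  have Hc: "H \<subseteq> carrier G" unfolding H_def by blast
  have sub1: "A \<subseteq> H #> a"
  proof
    fix x assume x: "x \<in> A"
    have xc: "x \<in> carrier G" using x A by blast
    have "A #> (x \<otimes> inv a) = (A #> x) #> inv a" using xc ac A(1) by (simp add: coset_mult_assoc)
    also have "A #> x = A #> a" using eq[rule_format, OF x a] .
    also have "(A #> a) #> inv a = A" using ac A(1) by (simp add: coset_mult_assoc)
    finally have "x \<otimes> inv a \<in> H" unfolding H_def using xc ac by simp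
    moreover have "x = (x \<otimes> inv a) \<otimes> a" using xc ac by (simp add: m_assoc)
    ultimately show "x \<in> H #> a" by (auto simp: r_coset_def)
  qed
  have sub2: "a <# H \<subseteq> A"
  proof
    fix y assume "y \<in> a <# H"
    then obtain h where h: "h \<in> H" "y = a \<otimes> h" by (auto simp: l_coset_def)
    have "y \<in> A #> h" using h a by (auto simp: r_coset_def)
    thus "y \<in> A" using h unfolding H_def by simp
  qed
  have finH: "finite H"
  proof -
    have "inj_on (\<lambda>h. a \<otimes> h) H"
    proof (rule inj_onI)
      fix u v assume "u \<in> H" "v \<in> H" "a \<otimes> u = a \<otimes> v"
      moreover hence "u \<in> carrier G" "v \<in> carrier G" using Hc by blast+
      ultimately show "u = v" using Units_l_cancel[of a u v] ac by simp
    qed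
    moreover have "(\<lambda>h. a \<otimes> h) ` H \<subseteq> A" using sub2 lcos_img[OF ac] by simp
    ultimately show ?thesis using A(2) finite_imageD finite_subset by blast
  qed
  have c1: "card (a <# H) = card H" using card_lcos ac Hc by blast
  have c2: "card (H #> a) = card H" using card_rcos ac Hc by blast
  have fr: "finite (H #> a)" using finH finite_rcos by blast
  have cA: "card A \<le> card H" using card_mono[OF fr sub1] c2 by simp
  have cH: "card H \<le> card A" using card_mono[OF A(2) sub2] c1 by simp
  have e1: "A = H #> a" using card_seteq[OF fr sub1] cH c2 by simp
  have e2: "a <# H = A" using card_seteq[OF A(2) sub2] cA c1 by simp
  show ?thesis using sub e1 e2 by blast
qed

lemma nc_lcond:
  assumes H: "subgroup H G" and a: "a \<in> carrier G" and A: "A = a <# H" and c: "a <# H = H #> a"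
  shows "\<forall>x\<in>A. \<forall>y\<in>A. x <# A = y <# A"
proof -
  have Hc: "H \<subseteq> carrier G" using H subgroup.subset by blast
  have "x <# A = (a <# H) #> a" if xA: "x \<in> A" for x
  proof -
    obtain h where h: "h \<in> H" "x = a \<otimes> h" using xA A unfolding l_coset_def by blast
    have hc: "h \<in> carrier G" using h Hc by blast
    have "x <# A = x <# (H #> a)" using A c by simp
    also have "\<dots> = (x <# H) #> a" using Hc a h hc by (simp add: coset_assoc)
    also have "x <# H = a <# (h <# H)" using Hc a h hc by (simp add: lcos_m_assoc)
    also have "h <# H = H" using coset_join3[OF hc H h(1)] .
    finally show ?thesis .
  qed
  thus ?thesis by auto
qed

lemma nc_rcond:
  assumes H: "subgroup H G" and a: "a \<in> carrier G" and A: "A = a <# H" and c: "a <# H = H #> a"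
  shows "\<forall>x\<in>A. \<forall>y\<in>A. A #> x = A #> y"
proof -
  have Hc: "H \<subseteq> carrier G" using H subgroup.subset by blast
  have "A #> x = a <# (H #> a)" if xA: "x \<in> A" for x
  proof -
    obtain h where h: "h \<in> H" "x = h \<otimes> a" using xA A c unfolding r_coset_def by blast
    have hc: "h \<in> carrier G" using h Hc by blast
    have "A #> x = (a <# H) #> x" using A by simp
    also have "\<dots> = a <# (H #> x)" using Hc a h hc by (simp add: coset_assoc)
    also have "H #> x = (H #> h) #> a" using Hc a h hc by (simp add: coset_mult_assoc)
    also have "H #> h = H" using coset_join2[OF hc H h(1)] .
    finally show ?thesis .
  qed
  thus ?thesis by auto
qed

end

theorem proposition2p19:
  fixes G (structure) and A :: "'a set"
  assumes "group G" and "A \<subseteq> carrier G" and "finite A" and "A \<noteq> {}"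
  shows "(\<forall>B. B \<subseteq> carrier G \<and> finite B \<and> B \<noteq> {} \<longrightarrow>
            (VC_left G B A = 0 \<longleftrightarrow> card (B <#> A) = card A) \<and>
            (VC_right G B A = 0 \<longleftrightarrow> card (A <#> B) = card A))
       \<and> (let Ai = set_inv A;
              cos = (\<exists>H a. subgroup H G \<and> a \<in> carrier G \<and> (A = a <# H \<or> A = H #> a))
          in (VC_left G Ai A = 0 \<longleftrightarrow> cos) \<and> (VC_right G Ai A = 0 \<longleftrightarrow> cos) \<and>
             (card (A <#> Ai) = card A \<longleftrightarrow> cos) \<and> (card (Ai <#> A) = card A \<longleftrightarrow> cos))
       \<and> (let nc = (\<exists>H a. subgroup H G \<and> a \<in> carrier G \<and> A = a <# H \<and> a <# H = H #> a)
          in (VC_left G A A = 0 \<longleftrightarrow> nc) \<and> (VC_right G A A = 0 \<longleftrightarrow> nc) \<and>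
             (card (A <#> A) = card A \<longleftrightarrow> nc))"
proof -
  interpret group G by fact
  have A: "A \<subseteq> carrier G" "finite A" "A \<noteq> {}" using assms by auto
  obtain a0 where a0: "a0 \<in> A" using A by blast
  have partA: "\<forall>B. B \<subseteq> carrier G \<and> finite B \<and> B \<noteq> {} \<longrightarrow>
            (VC_left G B A = 0 \<longleftrightarrow> card (B <#> A) = card A) \<and>
            (VC_right G B A = 0 \<longleftrightarrow> card (A <#> B) = card A)"
    using A VC_left_iff all_eq_card_l VC_right_iff all_eq_card_r by simp
  define Ai where "Ai = set_inv A"
  have Ai: "Ai \<subseteq> carrier G" "finite Ai" "Ai \<noteq> {}" using A unfolding Ai_def SET_INV_def by auto
  define cos where "cos = (\<exists>H a. subgroup H G \<and> a \<in> carrier G \<and> (A = a <# H \<or> A = H #> a))"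
  have L: "(\<forall>x\<in>Ai. \<forall>y\<in>Ai. x <# A = y <# A) \<longleftrightarrow> cos"
    unfolding Ai_def sinv_ball cos_def
  proof
    assume "\<forall>b\<in>A. \<forall>c\<in>A. inv b <# A = inv c <# A"
    from lcond_imp_coset[OF A(1) a0 this]
    show "\<exists>H a. subgroup H G \<and> a \<in> carrier G \<and> (A = a <# H \<or> A = H #> a)" by metis
  next
    assume "\<exists>H a. subgroup H G \<and> a \<in> carrier G \<and> (A = a <# H \<or> A = H #> a)"
    then show "\<forall>b\<in>A. \<forall>c\<in>A. inv b <# A = inv c <# A" by (metis coset_imp_lcond)
  qed
  have R: "(\<forall>x\<in>Ai. \<forall>y\<in>Ai. A #> x = A #> y) \<longleftrightarrow> cos"
    unfolding Ai_def sinv_ball cos_def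
  proof
    assume "\<forall>b\<in>A. \<forall>c\<in>A. A #> inv b = A #> inv c"
    from rcond_imp_coset[OF A(1) a0 this]
    show "\<exists>H a. subgroup H G \<and> a \<in> carrier G \<and> (A = a <# H \<or> A = H #> a)" by metis
  next
    assume "\<exists>H a. subgroup H G \<and> a \<in> carrier G \<and> (A = a <# H \<or> A = H #> a)"
    then show "\<forall>b\<in>A. \<forall>c\<in>A. A #> inv b = A #> inv c" by (metis coset_imp_rcond)
  qed
  have partB: "(VC_left G Ai A = 0 \<longleftrightarrow> cos) \<and> (VC_right G Ai A = 0 \<longleftrightarrow> cos) \<and>
             (card (A <#> Ai) = card A \<longleftrightarrow> cos) \<and> (card (Ai <#> A) = card A \<longleftrightarrow> cos)"
    using L R VC_left_iff[OF Ai(1) A(1)] VC_right_iff[OF Ai(1) A(1)]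
      all_eq_card_l[OF A(1,2) Ai] all_eq_card_r[OF A(1,2) Ai] by simp
  define nc where "nc = (\<exists>H a. subgroup H G \<and> a \<in> carrier G \<and> A = a <# H \<and> a <# H = H #> a)"
  have L2: "(\<forall>x\<in>A. \<forall>y\<in>A. x <# A = y <# A) \<longleftrightarrow> nc"
    unfolding nc_def
  proof
    assume "\<forall>x\<in>A. \<forall>y\<in>A. x <# A = y <# A"
    from lstab_nc[OF A(1,2) a0 this] a0 A(1)
    show "\<exists>H a. subgroup H G \<and> a \<in> carrier G \<and> A = a <# H \<and> a <# H = H #> a" by (metis subsetD)
  next
    assume "\<exists>H a. subgroup H G \<and> a \<in> carrier G \<and> A = a <# H \<and> a <# H = H #> a"
    then show "\<forall>x\<in>A. \<forall>y\<in>A. x <# A = y <# A" by (metis nc_lcond)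
  qed
  have R2: "(\<forall>x\<in>A. \<forall>y\<in>A. A #> x = A #> y) \<longleftrightarrow> nc"
    unfolding nc_def
  proof
    assume "\<forall>x\<in>A. \<forall>y\<in>A. A #> x = A #> y"
    from rstab_nc[OF A(1,2) a0 this] a0 A(1)
    show "\<exists>H a. subgroup H G \<and> a \<in> carrier G \<and> A = a <# H \<and> a <# H = H #> a" by (metis subsetD)
  next
    assume "\<exists>H a. subgroup H G \<and> a \<in> carrier G \<and> A = a <# H \<and> a <# H = H #> a"
    then show "\<forall>x\<in>A. \<forall>y\<in>A. A #> x = A #> y" by (metis nc_rcond)
  qed
  have partC: "(VC_left G A A = 0 \<longleftrightarrow> nc) \<and> (VC_right G A A = 0 \<longleftrightarrow> nc) \<and>
             (card (A <#> A) = card A \<longleftrightarrow> nc)"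
    using L2 R2 VC_left_iff[OF A(1) A(1)] VC_right_iff[OF A(1) A(1)]
      all_eq_card_l[OF A(1,2) A] by simp
  show ?thesis unfolding Let_def
    apply (intro conjI)
    using partA partB[unfolded Ai_def cos_def] partC[unfolded nc_def] by (simp_all only:)
qed

end
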